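(* Let $d\in\mathbb{N}$, $a<b$, $\alpha\in[0,1]$, $\rho\in\mathbb{R}^{d\times d}$ an invertible diagonal matrix, and $H:\mathbb{R}^d\times\mathbb{R}^d\to\mathbb{R}$, $(z,p_z)\mapsto H(z,p_z)$, a $C^1$ function that is even in its second variable, $H(z,-p_z)=H(z,p_z)$. Consider the systems, for smooth curves on $[a,b]$, $$\text{(a)}\quad \dot x=\frac{\partial H}{\partial p_x}(x,p_x),\quad D^\alpha_-x=-\rho^{-1}p^\alpha_y,\quad \dot p_x=-\frac{\partial H}{\partial x}(x,p_x)+D^\alpha_-p^\alpha_y,$$ $$\text{(b)}\quad \dot y=\frac{\partial H}{\partial p_y}(y,p_y),\quad D^\alpha_+y=-\rho^{-1}p^\alpha_x,\quad \dot p_y=-\frac{\partial H}{\partial y}(y,p_y)+D^\alpha_+p^\alpha_x.$$ Let $x,p_x,p^\alpha_y:[a,b]\to\mathbb{R}^d$ be smooth and set $y(t):=x(a+b-t)$, $p_y(t):=-p_x(a+b-t)$, $p^\alpha_x(t):=p^\alpha_y(a+b-t)$ (equivalently $p^\alpha_y(t)=p^\alpha_x(a+b-t)$). Then system (b) is system (a) in reversed time $\tilde t=a+b-t$: each equation of (b) holds at time $t$ if and only if the corresponding equation of (a) holds at time $\tilde t=a+b-t$.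
   Context: For $f:[a,b]\to\mathbb{R}$ (componentwise for vector-valued functions), $D^\alpha_-f(t)=\frac{1}{\Gamma(1-\alpha)}\frac{d}{dt}\int_a^t(t-\tau)^{-\alpha}f(\tau)\,d\tau$ and $D^\alpha_+f(t)=-\frac{1}{\Gamma(1-\alpha)}\frac{d}{dt}\int_t^b(\tau-t)^{-\alpha}f(\tau)\,d\tau$ (Riemann–Liouville fractional derivatives). Systems (a),(b) are the restricted fractional Hamilton equations for the Hamiltonian $H(x,p_x)+H(y,p_y)-p^\alpha_x\,\rho^{-1}\,p^\alpha_y$. *)

theory Defs
  imports "HOL-Analysis.Analysis"
begin

text \<open>Left Riemann-Liouville fractional derivative on [a,b]:
  D^alpha_- f(t) = v, i.e. the function s |-> 1/Gamma(1-alpha) * int_a^s (s-tau)^(-alpha) f(tau) dtau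
  has derivative v at t (relative to [a,b]). 1/Gamma is rGamma (rGamma 0 = 0).\<close>
definition rl_left_deriv ::
  "real \<Rightarrow> real \<Rightarrow> real \<Rightarrow> (real \<Rightarrow> real^'d) \<Rightarrow> real \<Rightarrow> real^'d \<Rightarrow> bool" where
  "rl_left_deriv \<alpha> a b f t v \<longleftrightarrow>
     ((\<lambda>s. rGamma (1 - \<alpha>) *\<^sub>R integral {a..s} (\<lambda>\<tau>. (s - \<tau>) powr (- \<alpha>) *\<^sub>R f \<tau>))
        has_vector_derivative v) (at t within {a..b})"

definition rl_right_deriv ::
  "real \<Rightarrow> real \<Rightarrow> real \<Rightarrow> (real \<Rightarrow> real^'d) \<Rightarrow> real \<Rightarrow> real^'d \<Rightarrow> bool" where
  "rl_right_deriv \<alpha> a b f t v \<longleftrightarrow>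
     ((\<lambda>s. - (rGamma (1 - \<alpha>) *\<^sub>R integral {s..b} (\<lambda>\<tau>. (\<tau> - s) powr (- \<alpha>) *\<^sub>R f \<tau>)))
        has_vector_derivative v) (at t within {a..b})"

definition grad_z :: "(real^'d \<Rightarrow> real^'d \<Rightarrow> real) \<Rightarrow> real^'d \<Rightarrow> real^'d \<Rightarrow> real^'d" where
  "grad_z H z p = (\<chi> i. frechet_derivative (\<lambda>(u, w). H u w) (at (z, p)) (axis i 1, 0))"

definition grad_p :: "(real^'d \<Rightarrow> real^'d \<Rightarrow> real) \<Rightarrow> real^'d \<Rightarrow> real^'d \<Rightarrow> real^'d" where
  "grad_p H z p = (\<chi> i. frechet_derivative (\<lambda>(u, w). H u w) (at (z, p)) (0, axis i 1))"

definition C1_hamiltonian :: "(real^'d \<Rightarrow> real^'d \<Rightarrow> real) \<Rightarrow> bool" where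
  "C1_hamiltonian H \<longleftrightarrow>
     (\<forall>w. (\<lambda>(u, v). H u v) differentiable (at w)) \<and>
     continuous_on UNIV (\<lambda>(z, p). grad_z H z p) \<and>
     continuous_on UNIV (\<lambda>(z, p). grad_p H z p)"

definition smooth_curve :: "real \<Rightarrow> real \<Rightarrow> (real \<Rightarrow> 'v::real_normed_vector) \<Rightarrow> bool" where
  "smooth_curve a b f \<longleftrightarrow>
     (\<exists>D :: nat \<Rightarrow> real \<Rightarrow> 'v. D 0 = f \<and>
        (\<forall>k. \<forall>t\<in>{a..b}. (D k has_vector_derivative D (Suc k) t) (at t within {a..b})))"

definition diagonal_matrix :: "real^'d^'d \<Rightarrow> bool" where
  "diagonal_matrix \<rho> \<longleftrightarrow> (\<forall>i j. i \<noteq> j \<longrightarrow> \<rho> $ i $ j = 0)"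

end

theory Submission
  imports Defs
begin

lemma integral_refl_aux:
  fixes g :: "real \<Rightarrow> 'v::real_normed_vector"
  shows "integral {s..b} (\<lambda>\<tau>. g (a + b - \<tau>)) = integral {a..a + b - s} g"
proof -
  have "integral {s..b} (\<lambda>\<tau>. g (a + b - \<tau>)) = integral {-b..-s} (\<lambda>y. g (y + (a+b)))"
    using Henstock_Kurzweil_Integration.integral_reflect_real[of "-s" "-b" "\<lambda>y. g (y + (a+b))"] by (simp add: algebra_simps)
  also have "\<dots> = integral {a - (a+b)..(a+b-s) - (a+b)} (\<lambda>y. g (y + (a+b)))"
    by simp
  also have "\<dots> = integral {a..a+b-s} g"
    by (rule integral_shift_real_ivl)
  finally show ?thesis .
qed

lemma refl_deriv:
  fixes g :: "real \<Rightarrow> 'v::real_normed_vector"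
  assumes "(g has_vector_derivative w) (at (a+b-t) within {a..b})"
  shows "((\<lambda>s. g (a+b-s)) has_vector_derivative -w) (at t within {a..b})"
proof -
  have r: "((\<lambda>s. a+b-s) has_vector_derivative (-1)) (at t within {a..b})"
    by (auto intro!: derivative_eq_intros)
  have img: "(\<lambda>s. a+b-s) ` {a..b} = {a..b}"
  proof
    show "(\<lambda>s. a+b-s) ` {a..b} \<subseteq> {a..b}" by auto
    show "{a..b} \<subseteq> (\<lambda>s. a+b-s) ` {a..b}"
    proof
      fix u assume "u \<in> {a..b}"
      then show "u \<in> (\<lambda>s. a+b-s) ` {a..b}" by (intro image_eqI[of _ _ "a+b-u"]) auto
    qed
  qed
  have "(g has_vector_derivative w) (at ((\<lambda>s. a+b-s) t) within (\<lambda>s. a+b-s) ` {a..b})"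
    using assms img by simp
  from vector_diff_chain_within[OF r this]
  show ?thesis by (simp add: o_def)
qed

lemma refl_deriv_iff:
  fixes x :: "real \<Rightarrow> 'v::real_normed_vector"
  shows "(((\<lambda>s. x (a+b-s)) has_vector_derivative -w) (at t within {a..b}))
     \<longleftrightarrow> ((x has_vector_derivative w) (at (a+b-t) within {a..b}))"
proof
  assume "((\<lambda>s. x (a+b-s)) has_vector_derivative -w) (at t within {a..b})"
  then have "((\<lambda>s. x (a+b-s)) has_vector_derivative -w) (at (a+b-(a+b-t)) within {a..b})" by simp
  from refl_deriv[OF this] show "(x has_vector_derivative w) (at (a+b-t) within {a..b})" by simp
next
  assume "(x has_vector_derivative w) (at (a+b-t) within {a..b})"
  from refl_deriv[OF this] show "((\<lambda>s. x (a+b-s)) has_vector_derivative -w) (at t within {a..b})" .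
qed

lemma rl_refl:
  fixes f :: "real \<Rightarrow> real^'d"
  shows "rl_right_deriv \<alpha> a b (\<lambda>s. f (a+b-s)) t v \<longleftrightarrow> rl_left_deriv \<alpha> a b f (a+b-t) v"
proof -
  define G where "G = (\<lambda>s. rGamma (1 - \<alpha>) *\<^sub>R integral {a..s} (\<lambda>\<tau>. (s - \<tau>) powr (- \<alpha>) *\<^sub>R f \<tau>))"
  have eq: "(\<lambda>s. - (rGamma (1 - \<alpha>) *\<^sub>R integral {s..b} (\<lambda>\<tau>. (\<tau> - s) powr (- \<alpha>) *\<^sub>R f (a+b-\<tau>))))
      = (\<lambda>s. - G (a+b-s))"
  proof
    fix s
    have "integral {s..b} (\<lambda>\<tau>. (\<tau> - s) powr (- \<alpha>) *\<^sub>R f (a+b-\<tau>))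
        = integral {s..b} (\<lambda>\<tau>. (\<lambda>\<sigma>. ((a+b-s) - \<sigma>) powr (- \<alpha>) *\<^sub>R f \<sigma>) (a+b-\<tau>))"
      by (simp add: algebra_simps)
    also have "\<dots> = integral {a..a+b-s} (\<lambda>\<sigma>. ((a+b-s) - \<sigma>) powr (- \<alpha>) *\<^sub>R f \<sigma>)"
      by (rule integral_refl_aux)
    finally show "- (rGamma (1 - \<alpha>) *\<^sub>R integral {s..b} (\<lambda>\<tau>. (\<tau> - s) powr (- \<alpha>) *\<^sub>R f (a+b-\<tau>)))
      = - G (a+b-s)" by (simp add: G_def)
  qed
  have "rl_right_deriv \<alpha> a b (\<lambda>s. f (a+b-s)) t v \<longleftrightarrow> (((\<lambda>s. - G (a+b-s))) has_vector_derivative v) (at t within {a..b})"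
    unfolding rl_right_deriv_def eq ..
  also have "\<dots> \<longleftrightarrow> (((\<lambda>s. (\<lambda>u. - G u) (a+b-s))) has_vector_derivative - (-v)) (at t within {a..b})"
    by simp
  also have "\<dots> \<longleftrightarrow> ((\<lambda>u. - G u) has_vector_derivative -v) (at (a+b-t) within {a..b})"
    by (rule refl_deriv_iff)
  also have "\<dots> \<longleftrightarrow> (G has_vector_derivative v) (at (a+b-t) within {a..b})"
  proof
    assume "((\<lambda>u. - G u) has_vector_derivative -v) (at (a+b-t) within {a..b})"
    from has_vector_derivative_minus[OF this] show "(G has_vector_derivative v) (at (a+b-t) within {a..b})" by simp
  next
    assume "(G has_vector_derivative v) (at (a+b-t) within {a..b})"
    from has_vector_derivative_minus[OF this] show "((\<lambda>u. - G u) has_vector_derivative -v) (at (a+b-t) within {a..b})" by simp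
  qed
  also have "\<dots> \<longleftrightarrow> rl_left_deriv \<alpha> a b f (a+b-t) v"
    unfolding rl_left_deriv_def G_def ..
  finally show ?thesis .
qed

lemma frechet_sym:
  fixes H :: "real^'d \<Rightarrow> real^'d \<Rightarrow> real"
  assumes diff: "\<forall>w. (\<lambda>(u, v). H u v) differentiable (at w)"
    and ev: "\<And>z p. H z (- p) = H z p"
  shows "frechet_derivative (\<lambda>(u, w). H u w) (at (z, p))
       = frechet_derivative (\<lambda>(u, w). H u w) (at (z, -p)) \<circ> (\<lambda>(u, w). (u, -w))"
proof -
  define h where "h = (\<lambda>(u, w). H u w)"
  define L :: "(real^'d) \<times> (real^'d) \<Rightarrow> (real^'d) \<times> (real^'d)" where "L = (\<lambda>(u, w). (u, -w))"
  define D' where "D' = frechet_derivative h (at (z, -p))"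
  have hD: "(h has_derivative D') (at (z, -p))"
    using diff unfolding D'_def h_def by (simp add: frechet_derivative_works[symmetric])
  have lin: "linear L" unfolding L_def
    by (auto simp: linear_iff)
  have hL: "(L has_derivative L) (at (z, p))"
    using lin by (simp add: linear_imp_has_derivative)
  have Lzp: "L (z, p) = (z, -p)" by (simp add: L_def)
  have "((h \<circ> L) has_derivative (D' \<circ> L)) (at (z, p))"
    by (rule diff_chain_at[OF hL]) (simp add: Lzp hD)
  moreover have "h \<circ> L = h" by (auto simp: h_def L_def ev)
  ultimately have "(h has_derivative (D' \<circ> L)) (at (z, p))" by simp
  then have "D' \<circ> L = frechet_derivative h (at (z, p))" by (rule frechet_derivative_at)
  then show ?thesis unfolding h_def D'_def L_def by simp
qed

lemma grad_sym:
  fixes H :: "real^'d \<Rightarrow> real^'d \<Rightarrow> real"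
  assumes "C1_hamiltonian H" and ev: "\<And>z p. H z (- p) = H z p"
  shows "grad_p H z (-p) = - grad_p H z p" and "grad_z H z (-p) = grad_z H z p"
proof -
  have diff: "\<forall>w. (\<lambda>(u, v). H u v) differentiable (at w)"
    using assms(1) by (simp add: C1_hamiltonian_def)
  define D' where "D' = frechet_derivative (\<lambda>(u, w). H u w) (at (z, -p))"
  have "((\<lambda>(u, w). H u w) has_derivative D') (at (z, -p))"
    using diff unfolding D'_def by (simp add: frechet_derivative_works[symmetric])
  then have lin: "linear D'" by (rule has_derivative_linear)
  have fs: "frechet_derivative (\<lambda>(u, w). H u w) (at (z, p)) = D' \<circ> (\<lambda>(u, w). (u, -w))"
    unfolding D'_def by (rule frechet_sym[OF diff ev])
  have n: "\<And>e::real^'d. D' (0, - e) = - D' (0, e)"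
  proof -
    fix e :: "real^'d"
    have "D' (- (0, e)) = - D' (0, e)" by (rule linear_neg[OF lin])
    then show "D' (0, - e) = - D' (0, e)" by simp
  qed
  show "grad_p H z (-p) = - grad_p H z p"
    unfolding grad_p_def fs D'_def[symmetric]
    by (simp add: n vec_eq_iff)
  show "grad_z H z (-p) = grad_z H z p"
    unfolding grad_z_def fs D'_def[symmetric]
    by (simp add: vec_eq_iff)
qed

theorem proposition3p13:
  fixes a b \<alpha> :: real
    and \<rho> :: "real^'d^'d"
    and H :: "real^'d \<Rightarrow> real^'d \<Rightarrow> real"
    and x px pya y py pxa :: "real \<Rightarrow> real^'d"
  assumes "a < b"
    and "0 \<le> \<alpha>" and "\<alpha> \<le> 1"
    and "invertible \<rho>" and "diagonal_matrix \<rho>"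
    and "C1_hamiltonian H"
    and "\<And>z p. H z (- p) = H z p"
    and "smooth_curve a b x" and "smooth_curve a b px" and "smooth_curve a b pya"
    and "\<And>t. y t = x (a + b - t)"
    and "\<And>t. py t = - px (a + b - t)"
    and "\<And>t. pxa t = pya (a + b - t)"
    and "t \<in> {a..b}"
  shows
    "((y has_vector_derivative grad_p H (y t) (py t)) (at t within {a..b})
       \<longleftrightarrow> (x has_vector_derivative grad_p H (x (a + b - t)) (px (a + b - t)))
             (at (a + b - t) within {a..b})) \<and>
    (rl_right_deriv \<alpha> a b y t (- (matrix_inv \<rho> *v pxa t))
       \<longleftrightarrow> rl_left_deriv \<alpha> a b x (a + b - t) (- (matrix_inv \<rho> *v pya (a + b - t)))) \<and>
    ((\<exists>v. rl_right_deriv \<alpha> a b pxa t v \<and>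
          (py has_vector_derivative (- grad_z H (y t) (py t) + v)) (at t within {a..b}))
       \<longleftrightarrow> (\<exists>v. rl_left_deriv \<alpha> a b pya (a + b - t) v \<and>
          (px has_vector_derivative (- grad_z H (x (a + b - t)) (px (a + b - t)) + v))
            (at (a + b - t) within {a..b})))"
proof -
  have yd: "y = (\<lambda>s. x (a+b-s))" using assms(11) by auto
  have pyd: "py = (\<lambda>s. (\<lambda>u. - px u) (a+b-s))" using assms(12) by auto
  have pxad: "pxa = (\<lambda>s. pya (a+b-s))" using assms(13) by auto
  note gs = grad_sym[OF assms(6) assms(7)]
  have c1: "(y has_vector_derivative grad_p H (y t) (py t)) (at t within {a..b})
       \<longleftrightarrow> (x has_vector_derivative grad_p H (x (a + b - t)) (px (a + b - t)))
             (at (a + b - t) within {a..b})"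
    unfolding yd assms(12) gs(1) refl_deriv_iff ..
  have c2: "rl_right_deriv \<alpha> a b y t (- (matrix_inv \<rho> *v pxa t))
       \<longleftrightarrow> rl_left_deriv \<alpha> a b x (a + b - t) (- (matrix_inv \<rho> *v pya (a + b - t)))"
    by (simp only: yd rl_refl assms(13))
  have dd: "\<And>w. (py has_vector_derivative w) (at t within {a..b})
      \<longleftrightarrow> (px has_vector_derivative w) (at (a + b - t) within {a..b})"
  proof -
    fix w
    have "(py has_vector_derivative w) (at t within {a..b})
      \<longleftrightarrow> ((\<lambda>u. - px u) has_vector_derivative -w) (at (a + b - t) within {a..b})"
      unfolding pyd using refl_deriv_iff[of "\<lambda>u. - px u" a b "-w" t] by simp
    also have "\<dots> \<longleftrightarrow> (px has_vector_derivative w) (at (a + b - t) within {a..b})"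
      using has_vector_derivative_minus by fastforce
    finally show "?thesis w" .
  qed
  have c3: "(\<exists>v. rl_right_deriv \<alpha> a b pxa t v \<and>
          (py has_vector_derivative (- grad_z H (y t) (py t) + v)) (at t within {a..b}))
       \<longleftrightarrow> (\<exists>v. rl_left_deriv \<alpha> a b pya (a + b - t) v \<and>
          (px has_vector_derivative (- grad_z H (x (a + b - t)) (px (a + b - t)) + v))
            (at (a + b - t) within {a..b}))"
    unfolding pxad rl_refl dd using assms(11,12) gs(2) by simp
  show ?thesis by (intro conjI c1 c2 c3)
qed

end
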